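(* For $n\geqslant1$ and $m,f\geqslant0$, let $\mathfrak{i}_{n,m,f}$ be the number of inversion sequences $\sigma$ of length $n$ avoiding both $010$ and $210$, with maximum value $m$ and $\mathrm{forb}(\sigma,\{010,210\})=f$. Then for all $n\geqslant 1$, $m\geqslant 1$ and $0\leqslant f\leqslant m+1$, $$\mathfrak{i}_{n,m,f}=\sum_{p=m+1}^{n}\sum_{i=0}^{f-1}\sum_{j=0}^{m-1}\mathfrak{i}_{p-1,j,i}\cdot\mathfrak{h}_{n-p,\,f-i-1},$$ where $\mathfrak{h}_{a,b}$ is the number of words of length $a$ over $\{1,\dots,b\}\sqcup\{\infty\}$ ($\infty$ the largest letter) avoiding $010$ whose subword obtained by deleting the letters $\infty$ is nondecreasing with maximum $b$ (or is empty, when $b=0$); in particular $\mathfrak{h}_{0,0}=1$ and $\mathfrak{h}_{0,b}=0$ for $b\geqslant1$.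
   Context: An inversion sequence of length $n$ is a sequence $(\sigma_1,\dots,\sigma_n)$ of integers with $0\leqslant\sigma_i<i$. A sequence contains a pattern $p$ if some subsequence is order-isomorphic to $p$; otherwise it avoids $p$. Avoiding $010$: no $i<j<l$ with $\sigma_i=\sigma_l<\sigma_j$. Avoiding $210$: no $i<j<l$ with $\sigma_i>\sigma_j>\sigma_l$. For a sequence $\sigma$ avoiding a set of patterns $P$, a value $v\in\{0,\dots,\max(\sigma)\}$ is forbidden if the sequence $\sigma$ followed by $M$ and then $v$ contains some pattern of $P$, where $M>\max(\sigma)$; $\mathrm{forb}(\sigma,P)$ is the number of forbidden values. *)

theory Defs
  imports Main
begin

text \<open>Inversion sequences are 0-indexed lists: entry k (position k+1) satisfies s!k \<le> k.\<close>
definition inv_seq :: "nat \<Rightarrow> nat list \<Rightarrow> bool" where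
  "inv_seq n s \<longleftrightarrow> length s = n \<and> (\<forall>k<n. s ! k < Suc k)"

definition order_iso :: "nat list \<Rightarrow> nat list \<Rightarrow> bool" where
  "order_iso u v \<longleftrightarrow> length u = length v \<and>
     (\<forall>a<length u. \<forall>b<length u. (u!a < u!b \<longleftrightarrow> v!a < v!b) \<and> (u!a = u!b \<longleftrightarrow> v!a = v!b))"

definition contains :: "nat list \<Rightarrow> nat list \<Rightarrow> bool" where
  "contains w p \<longleftrightarrow> (\<exists>idx. length idx = length p \<and> sorted_wrt (<) idx \<and>
      (\<forall>k\<in>set idx. k < length w) \<and> order_iso (map ((!) w) idx) p)"

definition avoids :: "nat list set \<Rightarrow> nat list \<Rightarrow> bool" where
  "avoids P w \<longleftrightarrow> (\<forall>p\<in>P. \<not> contains w p)"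

definition pat010 :: "nat list" where "pat010 = [0,1,0]"
definition pat210 :: "nat list" where "pat210 = [2,1,0]"

text \<open>Forbidden values; M is taken to be max + 1 (any M > max gives the same answer).\<close>
definition forb :: "nat list \<Rightarrow> nat list set \<Rightarrow> nat" where
  "forb s P = card {v. v \<le> Max (set s) \<and> \<not> avoids P (s @ [Suc (Max (set s)), v])}"

definition ifrak :: "nat \<Rightarrow> nat \<Rightarrow> nat \<Rightarrow> nat" where
  "ifrak n m f = card {s. inv_seq n s \<and> avoids {pat010, pat210} s \<and>
      Max (set s) = m \<and> forb s {pat010, pat210} = f}"

text \<open>Words over {1..b} \<union> {\<infinity>}, with \<infinity> encoded as the letter b+1 (largest letter).\<close>
definition hfrak :: "nat \<Rightarrow> nat \<Rightarrow> nat" where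
  "hfrak a b = card {w. length w = a \<and> set w \<subseteq> {1..Suc b} \<and> avoids {pat010} w \<and>
      (let u = filter (\<lambda>x. x \<noteq> Suc b) w in
         sorted u \<and> (if b = 0 then u = [] else u \<noteq> [] \<and> Max (set u) = b))}"

end

theory Submission
  imports Defs
begin


definition pairs :: "nat list \<Rightarrow> (nat\<times>nat) set" where
  "pairs s = {(s!i, s!j) | i j. i<j \<and> j<length s}"

lemma pairs_Nil[simp]: "pairs [] = {}"
  by (simp add: pairs_def)

lemma pairs_snoc: "pairs (s@[y]) = pairs s \<union> (set s \<times> {y})"
proof (rule set_eqI, rule iffI)
  fix x assume "x \<in> pairs (s@[y])"
  then obtain i j where ij: "i<j" "j<Suc (length s)" "x = ((s@[y])!i, (s@[y])!j)"
    by (auto simp: pairs_def)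
  show "x \<in> pairs s \<union> (set s \<times> {y})"
  proof (cases "j < length s")
    case True thus ?thesis using ij by (auto simp: pairs_def nth_append)
  next
    case False hence "j = length s" using ij by simp
    thus ?thesis using ij by (auto simp: nth_append)
  qed
next
  fix x assume "x \<in> pairs s \<union> (set s \<times> {y})"
  thus "x \<in> pairs (s@[y])"
  proof
    assume "x \<in> pairs s"
    then obtain i j where "i<j" "j<length s" "x = (s!i, s!j)" by (auto simp: pairs_def)
    hence "x = ((s@[y])!i, (s@[y])!j)" "i<j" "j < length (s@[y])" by (auto simp: nth_append)
    thus ?thesis unfolding pairs_def by blast
  next
    assume "x \<in> set s \<times> {y}"
    then obtain i where "i<length s" "x = (s!i, y)" by (auto simp: in_set_conv_nth)
    hence "x = ((s@[y])!i, (s@[y])!(length s))" "i<length s" "length s < length (s@[y])" by (auto simp: nth_append)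
    thus ?thesis unfolding pairs_def by blast
  qed
qed

lemma pairs_append: "pairs (u@v) = pairs u \<union> pairs v \<union> set u \<times> set v"
  by (induction v rule: rev_induct) (auto simp: pairs_snoc simp flip: append_assoc)

lemma pairs_Cons: "pairs (x#v) = pairs v \<union> {x} \<times> set v"
  using pairs_append[of "[x]" v] pairs_snoc[of "[]" x] by auto

lemma pairs_subset: "pairs s \<subseteq> set s \<times> set s"
  by (auto simp: pairs_def)

lemma len3: "length idx = Suc (Suc (Suc 0)) \<Longrightarrow> \<exists>i j l. idx = [i,j,l]"
  by (cases idx; cases "tl idx"; cases "tl (tl idx)") auto

lemma contains010: "contains w pat010 \<longleftrightarrow> (\<exists>i j l. i<j \<and> j<l \<and> l<length w \<and> w!i = w!l \<and> w!i < w!j)"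
proof
  assume "contains w pat010"
  then obtain idx where h: "length idx = Suc (Suc (Suc 0))" "sorted_wrt (<) idx" "\<forall>k\<in>set idx. k < length w"
     "order_iso (map ((!) w) idx) [0,1,0]" unfolding contains_def pat010_def by auto
  then obtain i j l where e: "idx = [i,j,l]" using len3 by blast
  have o: "\<forall>a<3. \<forall>b<3. ([w!i,w!j,w!l]!a < [w!i,w!j,w!l]!b \<longleftrightarrow> [0::nat,1,0]!a < [0,1,0]!b) \<and>
     ([w!i,w!j,w!l]!a = [w!i,w!j,w!l]!b \<longleftrightarrow> [0::nat,1,0]!a = [0,1,0]!b)"
    using h(4) e by (simp add: order_iso_def)
  have "w!i < w!j" using o[rule_format, of 0 1] by simp
  moreover have "w!i = w!l" using o[rule_format, of 0 2] by simp
  moreover have "i<j" "j<l" "l<length w" using h e by auto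
  ultimately show "\<exists>i j l. i<j \<and> j<l \<and> l<length w \<and> w!i = w!l \<and> w!i < w!j"
    by blast
next
  assume "\<exists>i j l. i<j \<and> j<l \<and> l<length w \<and> w!i = w!l \<and> w!i < w!j"
  then obtain i j l where h: "i<j" "j<l" "l<length w" "w!i = w!l" "w!i < w!j" by blast
  have "order_iso (map ((!) w) [i,j,l]) [0,1,0]"
    unfolding order_iso_def using h by (auto simp: less_Suc_eq numeral_3_eq_3 nth_Cons split: nat.splits)
  thus "contains w pat010" unfolding contains_def pat010_def
    by (rule_tac x="[i,j,l]" in exI) (use h in auto)
qed

lemma contains210: "contains w pat210 \<longleftrightarrow> (\<exists>i j l. i<j \<and> j<l \<and> l<length w \<and> w!j < w!i \<and> w!l < w!j)"
proof
  assume "contains w pat210"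
  then obtain idx where h: "length idx = Suc (Suc (Suc 0))" "sorted_wrt (<) idx" "\<forall>k\<in>set idx. k < length w"
     "order_iso (map ((!) w) idx) [2,1,0]" unfolding contains_def pat210_def by auto
  then obtain i j l where e: "idx = [i,j,l]" using len3 by blast
  have o: "\<forall>a<3. \<forall>b<3. ([w!i,w!j,w!l]!a < [w!i,w!j,w!l]!b \<longleftrightarrow> [2::nat,1,0]!a < [2,1,0]!b) \<and>
     ([w!i,w!j,w!l]!a = [w!i,w!j,w!l]!b \<longleftrightarrow> [2::nat,1,0]!a = [2,1,0]!b)"
    using h(4) e by (simp add: order_iso_def)
  have "w!j < w!i" using o[rule_format, of 1 0] by simp
  moreover have "w!l < w!j" using o[rule_format, of 2 1] by simp
  ultimately show "\<exists>i j l. i<j \<and> j<l \<and> l<length w \<and> w!j < w!i \<and> w!l < w!j"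
    using h e by auto
next
  assume "\<exists>i j l. i<j \<and> j<l \<and> l<length w \<and> w!j < w!i \<and> w!l < w!j"
  then obtain i j l where h: "i<j" "j<l" "l<length w" "w!j < w!i" "w!l < w!j" by blast
  have "order_iso (map ((!) w) [i,j,l]) [2,1,0]"
    unfolding order_iso_def using h by (auto simp: less_Suc_eq numeral_3_eq_3 nth_Cons split: nat.splits)
  thus "contains w pat210" unfolding contains_def pat210_def
    by (rule_tac x="[i,j,l]" in exI) (use h in auto)
qed



abbreviation "P2 \<equiv> {pat010, pat210}"

lemma c010_snoc: "contains (s@[y]) pat010 \<longleftrightarrow> contains s pat010 \<or> (\<exists>(a,b)\<in>pairs s. a = y \<and> a < b)"
  unfolding contains010
proof
  assume "\<exists>i j l. i<j \<and> j<l \<and> l<length (s@[y]) \<and> (s@[y])!i = (s@[y])!l \<and> (s@[y])!i < (s@[y])!j"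
  then obtain i j l where h: "i<j" "j<l" "l<length (s@[y])" "(s@[y])!i = (s@[y])!l" "(s@[y])!i < (s@[y])!j" by blast
  show "(\<exists>i j l. i<j \<and> j<l \<and> l<length s \<and> s!i = s!l \<and> s!i < s!j) \<or> (\<exists>(a,b)\<in>pairs s. a = y \<and> a < b)"
  proof (cases "l < length s")
    case True thus ?thesis using h by (auto simp: nth_append)
  next
    case False hence "l = length s" using h by simp
    hence "(s!i, s!j) \<in> pairs s" "s!i = y" "s!i < s!j" using h by (auto simp: pairs_def nth_append)
    thus ?thesis by blast
  qed
next
  assume "(\<exists>i j l. i<j \<and> j<l \<and> l<length s \<and> s!i = s!l \<and> s!i < s!j) \<or> (\<exists>(a,b)\<in>pairs s. a = y \<and> a < b)"
  thus "\<exists>i j l. i<j \<and> j<l \<and> l<length (s@[y]) \<and> (s@[y])!i = (s@[y])!l \<and> (s@[y])!i < (s@[y])!j"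
  proof
    assume "\<exists>i j l. i<j \<and> j<l \<and> l<length s \<and> s!i = s!l \<and> s!i < s!j"
    then obtain i j l where "i<j" "j<l" "l<length s" "s!i = s!l" "s!i < s!j" by blast
    thus ?thesis by (rule_tac x=i in exI, rule_tac x=j in exI, rule_tac x=l in exI) (auto simp: nth_append)
  next
    assume "\<exists>(a,b)\<in>pairs s. a = y \<and> a < b"
    then obtain i j where "i<j" "j<length s" "s!i = y" "s!i < s!j" by (auto simp: pairs_def)
    thus ?thesis by (rule_tac x=i in exI, rule_tac x=j in exI, rule_tac x="length s" in exI) (auto simp: nth_append)
  qed
qed

lemma c210_snoc: "contains (s@[y]) pat210 \<longleftrightarrow> contains s pat210 \<or> (\<exists>(a,b)\<in>pairs s. b < a \<and> y < b)"
  unfolding contains210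
proof
  assume "\<exists>i j l. i<j \<and> j<l \<and> l<length (s@[y]) \<and> (s@[y])!j < (s@[y])!i \<and> (s@[y])!l < (s@[y])!j"
  then obtain i j l where h: "i<j" "j<l" "l<length (s@[y])" "(s@[y])!j < (s@[y])!i" "(s@[y])!l < (s@[y])!j" by blast
  show "(\<exists>i j l. i<j \<and> j<l \<and> l<length s \<and> s!j < s!i \<and> s!l < s!j) \<or> (\<exists>(a,b)\<in>pairs s. b < a \<and> y < b)"
  proof (cases "l < length s")
    case True thus ?thesis using h by (auto simp: nth_append)
  next
    case False hence "l = length s" using h by simp
    hence "(s!i, s!j) \<in> pairs s" "s!j < s!i" "y < s!j" using h by (auto simp: pairs_def nth_append)
    thus ?thesis by blast
  qed
next
  assume "(\<exists>i j l. i<j \<and> j<l \<and> l<length s \<and> s!j < s!i \<and> s!l < s!j) \<or> (\<exists>(a,b)\<in>pairs s. b < a \<and> y < b)"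
  thus "\<exists>i j l. i<j \<and> j<l \<and> l<length (s@[y]) \<and> (s@[y])!j < (s@[y])!i \<and> (s@[y])!l < (s@[y])!j"
  proof
    assume "\<exists>i j l. i<j \<and> j<l \<and> l<length s \<and> s!j < s!i \<and> s!l < s!j"
    then obtain i j l where "i<j" "j<l" "l<length s" "s!j < s!i" "s!l < s!j" by blast
    thus ?thesis by (rule_tac x=i in exI, rule_tac x=j in exI, rule_tac x=l in exI) (auto simp: nth_append)
  next
    assume "\<exists>(a,b)\<in>pairs s. b < a \<and> y < b"
    then obtain i j where "i<j" "j<length s" "s!j < s!i" "y < s!j" by (auto simp: pairs_def)
    thus ?thesis by (rule_tac x=i in exI, rule_tac x=j in exI, rule_tac x="length s" in exI) (auto simp: nth_append)
  qed
qed

lemma contains_Nil: "\<not> contains [] pat010" "\<not> contains [] pat210"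
  by (auto simp: contains010 contains210)

lemma av2_iff: "avoids P2 s \<longleftrightarrow> \<not> contains s pat010 \<and> \<not> contains s pat210"
  by (simp add: avoids_def)

lemma av1_iff: "avoids {pat010} s \<longleftrightarrow> \<not> contains s pat010"
  by (simp add: avoids_def)

lemma av_snoc: "avoids P2 (s@[y]) \<longleftrightarrow> avoids P2 s \<and> \<not>(\<exists>(a,b)\<in>pairs s. (a = y \<and> a<b) \<or> (b<a \<and> y<b))"
  unfolding av2_iff c010_snoc c210_snoc by blast

definition Fs :: "nat list \<Rightarrow> nat set" where
  "Fs s = set s \<union> {x. \<exists>(a,b)\<in>pairs s. b<a \<and> x<b}"

lemma Fs_le_Max: "x \<in> Fs s \<Longrightarrow> x \<le> Max (set s)"
proof -
  assume "x \<in> Fs s"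
  then consider "x \<in> set s" | a b where "(a,b) \<in> pairs s" "x < b" unfolding Fs_def by blast
  thus ?thesis
  proof cases
    case 1 thus ?thesis by simp
  next
    case 2
    hence "b \<in> set s" using pairs_subset by blast
    hence "b \<le> Max (set s)" by simp
    thus ?thesis using 2 by simp
  qed
qed

lemma finite_Fs: "finite (Fs s)"
  by (rule finite_subset[of _ "{..Max (set s)}"]) (auto dest: Fs_le_Max)

lemma forb_eq:
  assumes "avoids P2 s" "s \<noteq> []"
  shows "forb s P2 = card (Fs s)"
proof -
  define M where "M = Suc (Max (set s))"
  have ltM: "x \<in> set s \<Longrightarrow> x < M" for x unfolding M_def by (simp add: le_imp_less_Suc)
  have avM: "avoids P2 (s@[M])"
    unfolding av_snoc
  proof (intro conjI assms(1) notI)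
    assume "\<exists>(a,b)\<in>pairs s. (a = M \<and> a<b) \<or> (b<a \<and> M<b)"
    then obtain a b where "(a,b)\<in>pairs s" "(a = M \<and> a<b) \<or> (b<a \<and> M<b)" by blast
    moreover have "a < M" "b < M" using calculation(1) pairs_subset ltM by blast+
    ultimately show False by auto
  qed
  have eq: "{v. v \<le> Max (set s) \<and> \<not> avoids P2 (s @ [M, v])} = Fs s"
  proof (rule set_eqI, rule iffI)
    fix v assume "v \<in> {v. v \<le> Max (set s) \<and> \<not> avoids P2 (s @ [M, v])}"
    hence "\<not> avoids P2 ((s @ [M]) @ [v])" by simp
    hence "\<exists>(a,b)\<in>pairs (s@[M]). (a = v \<and> a<b) \<or> (b<a \<and> v<b)" using avM unfolding av_snoc by blast
    then obtain a b where ab: "(a,b) \<in> pairs s \<union> set s \<times> {M}" "(a = v \<and> a<b) \<or> (b<a \<and> v<b)"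
      unfolding pairs_snoc by blast
    show "v \<in> Fs s"
    proof (cases "(a,b) \<in> pairs s")
      case True thus ?thesis using ab(2) pairs_subset[of s] unfolding Fs_def by blast
    next
      case False hence "a \<in> set s" "b = M" using ab by auto
      thus ?thesis using ab(2) ltM[of a] unfolding Fs_def by auto
    qed
  next
    fix v assume v: "v \<in> Fs s"
    have "\<exists>(a,b)\<in>pairs (s@[M]). (a = v \<and> a<b) \<or> (b<a \<and> v<b)"
    proof (cases "v \<in> set s")
      case True thus ?thesis using ltM[OF True] unfolding pairs_snoc by blast
    next
      case False thus ?thesis using v unfolding pairs_snoc Fs_def by blast
    qed
    hence "\<not> avoids P2 ((s @ [M]) @ [v])" unfolding av_snoc by blast
    thus "v \<in> {v. v \<le> Max (set s) \<and> \<not> avoids P2 (s @ [M, v])}" using Fs_le_Max[OF v] by simp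
  qed
  show ?thesis unfolding forb_def M_def[symmetric] eq ..
qed



lemma pairs_mid: "pairs (\<tau>@m#w) = pairs \<tau> \<union> pairs w \<union> {m} \<times> set w \<union> set \<tau> \<times> insert m (set w)"
  by (auto simp: pairs_append pairs_Cons)

lemma bad_iff:
  assumes t: "\<forall>x\<in>set \<tau>. x < m" and w: "\<forall>x\<in>set w. x \<le> m" and y: "y \<le> m"
  shows "(\<exists>(a,b)\<in>pairs (\<tau>@m#w). (a=y \<and> a<b) \<or> (b<a \<and> y<b)) \<longleftrightarrow>
     y \<in> Fs \<tau> \<or> (\<exists>b\<in>set w. b\<noteq>m \<and> y<b) \<or> (\<exists>(a,b)\<in>pairs w. a=y \<and> a<b)"
proof
  assume "\<exists>(a,b)\<in>pairs (\<tau>@m#w). (a=y \<and> a<b) \<or> (b<a \<and> y<b)"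
  then obtain a b where ab1: "(a,b)\<in>pairs (\<tau>@m#w)" and ab: "(a=y \<and> a<b) \<or> (b<a \<and> y<b)" by blast
  from ab1 consider "(a,b) \<in> pairs \<tau>" | "(a,b) \<in> pairs w" | "a = m" "b \<in> set w" | "a \<in> set \<tau>" "b \<in> insert m (set w)"
    unfolding pairs_mid by blast
  thus "y \<in> Fs \<tau> \<or> (\<exists>b\<in>set w. b\<noteq>m \<and> y<b) \<or> (\<exists>(a,b)\<in>pairs w. a=y \<and> a<b)"
  proof cases
    case 1
    show ?thesis
    proof (cases "a=y \<and> a<b")
      case True
      hence "y \<in> set \<tau>" using 1 pairs_subset[of \<tau>] by blast
      thus ?thesis unfolding Fs_def by blast
    next
      case False
      hence "b<a" "y<b" using ab by auto
      thus ?thesis using 1 unfolding Fs_def by blast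
    qed
  next
    case 2
    show ?thesis
    proof (cases "a=y \<and> a<b")
      case True thus ?thesis using 2 by blast
    next
      case False
      hence ba: "b<a" and yb: "y<b" using ab by auto
      have "a \<in> set w" "b \<in> set w" using 2 pairs_subset[of w] by blast+
      hence "a \<le> m" using w by blast
      hence "b \<noteq> m" using ba by simp
      thus ?thesis using yb \<open>b \<in> set w\<close> by blast
    qed
  next
    case 3
    have "b \<le> m" using 3 w by blast
    hence "b<a" "y<b" using ab 3 by auto
    hence "b \<noteq> m" using 3 by simp
    thus ?thesis using \<open>y<b\<close> 3 by blast
  next
    case 4
    show ?thesis
    proof (cases "a=y")
      case True thus ?thesis using 4 unfolding Fs_def by blast
    next
      case False
      hence ba: "b<a" and yb: "y<b" using ab by auto
      have "a < m" using 4 t by blast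
      hence "b \<noteq> m" "b \<in> set w" using ba 4 by auto
      thus ?thesis using yb by blast
    qed
  qed
next
  assume "y \<in> Fs \<tau> \<or> (\<exists>b\<in>set w. b\<noteq>m \<and> y<b) \<or> (\<exists>(a,b)\<in>pairs w. a=y \<and> a<b)"
  then consider "y \<in> set \<tau>" | "\<exists>(a,b)\<in>pairs \<tau>. b<a \<and> y<b" | "\<exists>b\<in>set w. b\<noteq>m \<and> y<b"
     | "\<exists>(a,b)\<in>pairs w. a=y \<and> a<b" unfolding Fs_def by blast
  thus "\<exists>(a,b)\<in>pairs (\<tau>@m#w). (a=y \<and> a<b) \<or> (b<a \<and> y<b)"
  proof cases
    case 1
    hence "(y,m) \<in> pairs (\<tau>@m#w)" unfolding pairs_mid by blast
    moreover have "y < m" using 1 t by blast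
    ultimately show ?thesis by blast
  next
    case 2
    then obtain a b where "(a,b) \<in> pairs \<tau>" "b<a" "y<b" by blast
    moreover hence "(a,b) \<in> pairs (\<tau>@m#w)" unfolding pairs_mid by blast
    ultimately show ?thesis by blast
  next
    case 3
    then obtain b where b: "b \<in> set w" "b \<noteq> m" "y < b" by blast
    have "b < m" using b w by force
    moreover have "(m,b) \<in> pairs (\<tau>@m#w)" using b(1) unfolding pairs_mid by blast
    ultimately show ?thesis using b(3) by blast
  next
    case 4
    then obtain a b where "(a,b) \<in> pairs w" "a=y" "a<b" by blast
    moreover hence "(a,b) \<in> pairs (\<tau>@m#w)" unfolding pairs_mid by blast
    ultimately show ?thesis by blast
  qed
qed

lemma Fs_lt: "\<forall>x\<in>set \<tau>. x < m \<Longrightarrow> x \<in> Fs \<tau> \<Longrightarrow> x < m"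
  unfolding Fs_def using pairs_subset[of \<tau>] by fastforce


lemma av_split:
  assumes t: "\<forall>x\<in>set \<tau>. x < m" and w: "\<forall>x\<in>set w. x \<le> m"
  shows "avoids P2 (\<tau>@m#w) \<longleftrightarrow> avoids P2 \<tau> \<and> (\<forall>x\<in>set w. x = m \<or> x \<notin> Fs \<tau>) \<and>
     sorted (filter (\<lambda>x. x \<noteq> m) w) \<and> \<not> contains w pat010"
  using w
proof (induction w rule: rev_induct)
  case Nil
  have "\<not>(\<exists>(a,b)\<in>pairs \<tau>. (a = m \<and> a<b) \<or> (b<a \<and> m<b))"
  proof
    assume "\<exists>(a,b)\<in>pairs \<tau>. (a = m \<and> a<b) \<or> (b<a \<and> m<b)"
    then obtain a b where "(a,b)\<in>pairs \<tau>" "(a = m \<and> a<b) \<or> (b<a \<and> m<b)" by blast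
    moreover have "a < m" "b < m" using calculation(1) pairs_subset t by blast+
    ultimately show False by auto
  qed
  thus ?case using av_snoc[of \<tau> m] contains_Nil by simp
next
  case (snoc y w)
  have wl: "\<forall>x\<in>set w. x \<le> m" and yl: "y \<le> m" using snoc.prems by auto
  have e: "\<tau>@m#(w@[y]) = (\<tau>@m#w)@[y]" by simp
  have B: "(\<exists>(a,b)\<in>pairs (\<tau>@m#w). (a=y \<and> a<b) \<or> (b<a \<and> y<b)) \<longleftrightarrow>
     y \<in> Fs \<tau> \<or> (\<exists>b\<in>set w. b\<noteq>m \<and> y<b) \<or> (\<exists>(a,b)\<in>pairs w. a=y \<and> a<b)"
    by (rule bad_iff[OF t wl yl])
  have mF: "m \<notin> Fs \<tau>" using Fs_lt[OF t] by blast
  have S: "sorted (filter (\<lambda>x. x \<noteq> m) (w@[y])) \<longleftrightarrow> sorted (filter (\<lambda>x. x \<noteq> m) w) \<and> (y = m \<or> (\<forall>b\<in>set w. b\<noteq>m \<longrightarrow> b \<le> y))"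
    by (auto simp: sorted_append)
  show ?case unfolding e av_snoc snoc.IH[OF wl] B S c010_snoc
    using mF yl wl by (auto simp: not_less)
qed


lemma Fs_split:
  assumes t: "\<forall>x\<in>set \<tau>. x < m" and w: "\<forall>x\<in>set w. x \<le> m"
  shows "Fs (\<tau>@m#w) = Fs \<tau> \<union> {m} \<union> {x. \<exists>b\<in>set w. b\<noteq>m \<and> x \<le> b}"
proof (rule set_eqI, rule iffI)
  fix x assume "x \<in> Fs (\<tau>@m#w)"
  then consider "x \<in> set \<tau>" | "x = m" | "x \<in> set w" | a b where "(a,b) \<in> pairs (\<tau>@m#w)" "b<a" "x<b"
    unfolding Fs_def by auto
  thus "x \<in> Fs \<tau> \<union> {m} \<union> {x. \<exists>b\<in>set w. b\<noteq>m \<and> x \<le> b}"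
  proof cases
    case 1 thus ?thesis unfolding Fs_def by blast
  next
    case 2 thus ?thesis by blast
  next
    case 3 thus ?thesis by blast
  next
    case 4
    from 4(1) consider "(a,b) \<in> pairs \<tau>" | "(a,b) \<in> pairs w" | "a = m" "b \<in> set w" | "a \<in> set \<tau>" "b \<in> insert m (set w)"
      unfolding pairs_mid by blast
    thus ?thesis
    proof cases
      case 1 thus ?thesis using 4 unfolding Fs_def by blast
    next
      case 2
      have "a \<le> m" "b \<in> set w" using 2 pairs_subset[of w] w by blast+
      hence "b \<noteq> m" using 4 by simp
      thus ?thesis using 4 \<open>b \<in> set w\<close> by (intro UnI2 CollectI bexI[of _ b]) auto
    next
      case 3 thus ?thesis using 4 by force
    next
      case 5: 4
      have "a < m" using 5 t by blast
      hence "b \<noteq> m" "b \<in> set w" using 4 5 by auto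
      moreover have "x \<le> b" using 4 by simp
      ultimately show ?thesis by blast
    qed
  qed
next
  fix x assume "x \<in> Fs \<tau> \<union> {m} \<union> {x. \<exists>b\<in>set w. b\<noteq>m \<and> x \<le> b}"
  then consider "x \<in> set \<tau>" | "\<exists>(a,b)\<in>pairs \<tau>. b<a \<and> x<b" | "x = m" | b where "b\<in>set w" "b\<noteq>m" "x \<le> b"
    unfolding Fs_def by blast
  thus "x \<in> Fs (\<tau>@m#w)"
  proof cases
    case 1 thus ?thesis unfolding Fs_def by simp
  next
    case 2 thus ?thesis unfolding Fs_def pairs_mid by blast
  next
    case 3 thus ?thesis unfolding Fs_def by simp
  next
    case 4
    show ?thesis
    proof (cases "x = b")
      case True thus ?thesis using 4 unfolding Fs_def by simp
    next
      case False
      hence "x < b" using 4 by simp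
      moreover have "b < m" using 4 w by force
      moreover have "(m,b) \<in> pairs (\<tau>@m#w)" using 4 unfolding pairs_mid by blast
      ultimately show ?thesis unfolding Fs_def by blast
    qed
  qed
qed



definition Wg :: "nat set \<Rightarrow> nat \<Rightarrow> nat \<Rightarrow> nat list set" where
  "Wg A t a = {w. length w = a \<and> set w \<subseteq> A \<union> {t} \<and> avoids {pat010} w \<and>
     sorted (filter (\<lambda>x. x \<noteq> t) w) \<and>
     (if A = {} then filter (\<lambda>x. x \<noteq> t) w = [] else filter (\<lambda>x. x \<noteq> t) w \<noteq> [] \<and> Max (set (filter (\<lambda>x. x \<noteq> t) w)) = Max A)}"

lemma Max_1b: "Suc 0 \<le> b \<Longrightarrow> Max {Suc 0..b} = b"
  by (rule Max_eqI) auto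

lemma hfrak_Wg: "hfrak a b = card (Wg {1..b} (Suc b) a)"
proof -
  have "{w. length w = a \<and> set w \<subseteq> {1..Suc b} \<and> avoids {pat010} w \<and>
      (let u = filter (\<lambda>x. x \<noteq> Suc b) w in
         sorted u \<and> (if b = 0 then u = [] else u \<noteq> [] \<and> Max (set u) = b))} = Wg {1..b} (Suc b) a"
    unfolding Wg_def Let_def
    by (rule Collect_cong) (auto simp: atLeastAtMostSuc_conv Max_1b)
  thus ?thesis unfolding hfrak_def by simp
qed

definition isoon :: "nat set \<Rightarrow> (nat \<Rightarrow> nat) \<Rightarrow> bool" where
  "isoon S g \<longleftrightarrow> (\<forall>x\<in>S. \<forall>y\<in>S. g x < g y \<longleftrightarrow> x < y)"

lemma isoon_eq: "isoon S g \<Longrightarrow> x \<in> S \<Longrightarrow> y \<in> S \<Longrightarrow> g x = g y \<longleftrightarrow> x = y"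
  unfolding isoon_def by (metis linorder_neqE_nat less_irrefl)

lemma isoon_le: "isoon S g \<Longrightarrow> x \<in> S \<Longrightarrow> y \<in> S \<Longrightarrow> g x \<le> g y \<longleftrightarrow> x \<le> y"
  unfolding isoon_def by (meson not_less)

lemma isoon_mono: "isoon S g \<Longrightarrow> T \<subseteq> S \<Longrightarrow> isoon T g"
  unfolding isoon_def by blast

lemma isoon_inj: "isoon S g \<Longrightarrow> inj_on g S"
  unfolding inj_on_def using isoon_eq by blast

lemma order_iso_map:
  assumes "isoon (set u) g"
  shows "order_iso (map g u) p \<longleftrightarrow> order_iso u p"
  unfolding order_iso_def using assms
  by (auto simp: isoon_def isoon_eq[OF assms])

lemma contains_map:
  assumes "isoon (set w) g"
  shows "contains (map g w) p \<longleftrightarrow> contains w p"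
proof -
  have "map ((!) (map g w)) idx = map g (map ((!) w) idx)" if "\<forall>k\<in>set idx. k < length w" for idx
    using that by auto
  moreover have "isoon (set (map ((!) w) idx)) g" if "\<forall>k\<in>set idx. k < length w" for idx
    using that by (intro isoon_mono[OF assms]) auto
  ultimately have "(\<forall>k\<in>set idx. k < length w) \<Longrightarrow>
     order_iso (map ((!) (map g w)) idx) p \<longleftrightarrow> order_iso (map ((!) w) idx) p" for idx
    using order_iso_map by metis
  thus ?thesis unfolding contains_def by auto
qed

lemma sorted_map_iso: "isoon (set u) g \<Longrightarrow> sorted (map g u) \<longleftrightarrow> sorted u"
proof (induction u)
  case Nil thus ?case by simp
next
  case (Cons x u)
  have i: "isoon (set u) g" using Cons.prems by (rule isoon_mono) auto
  show ?case using Cons.IH[OF i] isoon_le[OF Cons.prems] by auto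
qed

lemma Max_iso: "isoon S g \<Longrightarrow> finite S \<Longrightarrow> S \<noteq> {} \<Longrightarrow> Max (g ` S) = g (Max S)"
proof (rule Max_eqI)
  assume a: "isoon S g" "finite S" "S \<noteq> {}"
  show "finite (g ` S)" using a by simp
  show "y \<le> g (Max S)" if "y \<in> g ` S" for y
    using that a isoon_le[OF a(1)] Max_ge Max_in by fastforce
  show "g (Max S) \<in> g ` S" using a by simp
qed

lemma Wg_map:
  assumes fin: "finite A" and iso: "isoon (A \<union> {t}) g" and w: "w \<in> Wg A t a"
  shows "map g w \<in> Wg (g ` A) (g t) a"
proof -
  let ?u = "filter (\<lambda>x. x \<noteq> t) w"
  have sw: "set w \<subseteq> A \<union> {t}" using w by (simp add: Wg_def)
  have isw: "isoon (set w) g" using isoon_mono[OF iso sw] .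
  have f: "filter (\<lambda>x. x \<noteq> g t) (map g w) = map g ?u"
    unfolding filter_map o_def
    by (rule arg_cong[where f="map g"], rule filter_cong) (use sw isoon_eq[OF iso] in auto)
  have su: "set ?u \<subseteq> A" using sw by auto
  have isu: "isoon (set ?u) g" using isoon_mono[OF iso] su by blast
  have c: "contains (map g w) pat010 \<longleftrightarrow> contains w pat010" by (rule contains_map[OF isw])
  have s: "sorted (map g ?u) \<longleftrightarrow> sorted ?u" by (rule sorted_map_iso[OF isu])
  have m: "Max (set (map g ?u)) = g (Max A) \<longleftrightarrow> Max (set ?u) = Max A" if "?u \<noteq> []" "A \<noteq> {}"
  proof -
    have ne: "set ?u \<noteq> {}" using that(1) by (metis set_empty)
    have "Max (g ` set ?u) = g (Max (set ?u))" by (rule Max_iso[OF isu finite_set ne])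
    hence "Max (set (map g ?u)) = g (Max (set ?u))" by (simp only: set_map)
    moreover have "Max (set ?u) \<in> set ?u" by (rule Max_in[OF finite_set ne])
    hence "Max (set ?u) \<in> A" using su by blast
    moreover have "Max A \<in> A" using fin that by simp
    ultimately show ?thesis using isoon_eq[OF iso] by auto
  qed
  have W: "length w = a" "\<not> contains w pat010" "sorted ?u"
     "if A = {} then ?u = [] else ?u \<noteq> [] \<and> Max (set ?u) = Max A"
    using w unfolding Wg_def av1_iff mem_Collect_eq by blast+
  have gA: "Max (g ` A) = g (Max A)" if "A \<noteq> {}" using Max_iso[OF isoon_mono[OF iso] fin that] by blast
  have "set (map g w) \<subseteq> g ` A \<union> {g t}" using sw by auto
  moreover have "if g ` A = {} then map g ?u = [] else map g ?u \<noteq> [] \<and> Max (set (map g ?u)) = Max (g ` A)"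
    using W(4) m gA by (cases "A = {}") auto
  ultimately show ?thesis unfolding Wg_def mem_Collect_eq f av1_iff c s using W by simp
qed

lemma finite_Wg: "finite A \<Longrightarrow> finite (Wg A t a)"
  by (rule finite_subset[OF _ finite_lists_length_eq[of "A \<union> {t}" a]]) (auto simp: Wg_def)

lemma Wg_le:
  assumes fin: "finite A" and iso: "isoon (A \<union> {t}) g"
  shows "card (Wg A t a) \<le> card (Wg (g ` A) (g t) a)"
proof (rule card_inj_on_le)
  show "inj_on (map g) (Wg A t a)"
  proof (rule inj_onI)
    fix x y assume "x \<in> Wg A t a" "y \<in> Wg A t a" "map g x = map g y"
    moreover have "inj_on g (set x \<union> set y)" using calculation(1,2)
      by (intro inj_on_subset[OF isoon_inj[OF iso]]) (auto simp: Wg_def)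
    ultimately show "x = y" using map_inj_on by blast
  qed
  show "map g ` Wg A t a \<subseteq> Wg (g ` A) (g t) a" using Wg_map[OF fin iso] by blast
  show "finite (Wg (g ` A) (g t) a)" using finite_Wg fin by blast
qed

lemma Wg_iso:
  assumes fin: "finite A" and iso: "isoon (A \<union> {t}) g"
  shows "card (Wg A t a) = card (Wg (g ` A) (g t) a)"
proof (rule antisym[OF Wg_le[OF assms]])
  define h where "h = the_inv_into (A \<union> {t}) g"
  have inj: "inj_on g (A \<union> {t})" using isoon_inj[OF iso] .
  have hg: "x \<in> A \<union> {t} \<Longrightarrow> h (g x) = x" for x unfolding h_def by (rule the_inv_into_f_f[OF inj])
  have iso2: "isoon (g ` A \<union> {g t}) h"
    unfolding isoon_def
  proof (intro ballI)
    fix x y assume "x \<in> g ` A \<union> {g t}" "y \<in> g ` A \<union> {g t}"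
    then obtain x' y' where "x' \<in> A \<union> {t}" "y' \<in> A \<union> {t}" "x = g x'" "y = g y'" by blast
    thus "h x < h y \<longleftrightarrow> x < y" using hg iso unfolding isoon_def by auto
  qed
  have "card (Wg (g ` A) (g t) a) \<le> card (Wg (h ` g ` A) (h (g t)) a)"
    using Wg_le[OF _ iso2] fin by blast
  moreover have "h ` g ` A = A" using hg by (force simp: image_image)
  moreover have "h (g t) = t" using hg by simp
  ultimately show "card (Wg (g ` A) (g t) a) \<le> card (Wg A t a)" by simp
qed



lemma ss_less: "sorted_wrt (<) cs \<Longrightarrow> i < length cs \<Longrightarrow> j < length cs \<Longrightarrow> cs!i < (cs!j::nat) \<longleftrightarrow> i < j"
  by (metis linorder_neqE_nat not_less_iff_gr_or_eq sorted_wrt_nth_less)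

lemma ss_le: "sorted_wrt (<) cs \<Longrightarrow> i < length cs \<Longrightarrow> j < length cs \<Longrightarrow> cs!i \<le> (cs!j::nat) \<longleftrightarrow> i \<le> j"
  by (meson not_less ss_less)

lemma in_take_iff: "x \<in> set (take n cs) \<longleftrightarrow> (\<exists>k<min n (length cs). cs!k = x)"
  by (auto simp: in_set_conv_nth)

lemma ss_take:
  fixes cs :: "nat list"
  assumes s: "sorted_wrt (<) cs" and r: "r < length cs"
  shows "set cs \<inter> {..cs!r} = set (take (Suc r) cs)"
proof (rule set_eqI)
  fix x
  show "x \<in> set cs \<inter> {..cs!r} \<longleftrightarrow> x \<in> set (take (Suc r) cs)"
  proof
    assume "x \<in> set cs \<inter> {..cs!r}"
    then obtain k where "k < length cs" "cs!k = x" "x \<le> cs!r" by (auto simp: in_set_conv_nth)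
    moreover hence "k \<le> r" using ss_le[OF s _ r] by blast
    ultimately show "x \<in> set (take (Suc r) cs)" unfolding in_take_iff by (intro exI[of _ k]) auto
  next
    assume "x \<in> set (take (Suc r) cs)"
    then obtain k where "k < min (Suc r) (length cs)" "cs!k = x" unfolding in_take_iff by blast
    thus "x \<in> set cs \<inter> {..cs!r}" using ss_le[OF s _ r, of k] by auto
  qed
qed

lemma Max_take:
  fixes cs :: "nat list"
  assumes s: "sorted_wrt (<) cs" and b: "1 \<le> b" "b \<le> length cs"
  shows "Max (set (take b cs)) = cs!(b-1)"
proof (rule Max_eqI)
  show "finite (set (take b cs))" by simp
  show "y \<le> cs!(b-1)" if yin: "y \<in> set (take b cs)" for y
  proof -
    obtain k where "k < min b (length cs)" "cs!k = y" using yin unfolding in_take_iff by blast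
    thus ?thesis using ss_le[OF s, of k "b-1"] b by auto
  qed
  show "cs!(b-1) \<in> set (take b cs)" unfolding in_take_iff using b by (intro exI[of _ "b-1"]) auto
qed

lemma card_take_distinct: "distinct cs \<Longrightarrow> r \<le> length cs \<Longrightarrow> card (set (take r cs)) = r"
  by (simp add: distinct_card)



lemma W_char:
  fixes F :: "nat set" and w :: "nat list"
  assumes fin: "finite F" and Fm: "F \<subseteq> {..<m}" and ci: "card F = i" and lif: "i < f"
    and fm: "f \<le> Suc m" and wm: "set w \<subseteq> {..m}"
  defines "cs \<equiv> sorted_list_of_set ({..<m} - F)"
  defines "A \<equiv> set (take (f - i - 1) cs)"
  shows "((\<forall>x\<in>set w. x = m \<or> x \<notin> F) \<and> card (F \<union> {m} \<union> {x. \<exists>b\<in>set w. b\<noteq>m \<and> x \<le> b}) = f) \<longleftrightarrow>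
     (set w \<subseteq> A \<union> {m} \<and> (if A = {} then filter (\<lambda>x. x\<noteq>m) w = [] else filter (\<lambda>x. x\<noteq>m) w \<noteq> [] \<and> Max (set (filter (\<lambda>x. x\<noteq>m) w)) = Max A))"
proof -
  let ?C = "{..<m} - F"
  let ?V = "filter (\<lambda>x. x\<noteq>m) w"
  define b where "b = f - i - 1"
  have fb: "f = Suc (i + b)" using lif by (simp add: b_def)
  have Ab: "A = set (take b cs)" by (simp add: A_def b_def)
  have scs: "sorted_wrt (<) cs" "set cs = ?C" "distinct cs" by (simp_all add: cs_def)
  have cC: "card ?C = m - i" using Fm fin ci by (simp add: card_Diff_subset)
  have lcs: "length cs = m - i" using cC by (simp add: cs_def)
  have bl: "b \<le> length cs" using fm fb lcs by simp
  have mF: "m \<notin> F" using Fm by auto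
  have cardmF: "card (F \<union> {m}) = Suc i" using mF fin ci by simp
  have Aempty: "A = {} \<longleftrightarrow> b = 0" unfolding Ab using bl by auto
  show ?thesis
  proof (cases "?V = []")
    case True
    hence wmm: "\<forall>x\<in>set w. x = m" by (simp add: filter_empty_conv)
    hence D: "{x. \<exists>b\<in>set w. b\<noteq>m \<and> x \<le> b} = {}" by auto
    have "set w \<subseteq> A \<union> {m}" using wmm by auto
    thus ?thesis using True wmm D cardmF fb Aempty by auto
  next
    case False
    define u where "u = Max (set ?V)"
    have Vne: "set ?V \<noteq> {}" using False by (metis set_empty)
    have uV: "u \<in> set ?V" unfolding u_def by (rule Max_in[OF finite_set Vne])
    have Vle: "x \<in> set ?V \<Longrightarrow> x \<le> u" for x unfolding u_def by simp
    have um: "u < m" using uV wm by force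
    have D: "{x. \<exists>b\<in>set w. b\<noteq>m \<and> x \<le> b} = {..u}"
    proof (rule set_eqI, rule iffI)
      fix x assume "x \<in> {x. \<exists>b\<in>set w. b\<noteq>m \<and> x \<le> b}"
      then obtain c where "c \<in> set w" "c \<noteq> m" "x \<le> c" by blast
      hence "c \<le> u" using Vle by simp
      thus "x \<in> {..u}" using \<open>x \<le> c\<close> by simp
    next
      fix x assume "x \<in> {..u}"
      thus "x \<in> {x. \<exists>b\<in>set w. b\<noteq>m \<and> x \<le> b}" using uV by auto
    qed
    have cardD: "card (F \<union> {m} \<union> {..u}) = Suc i + card (?C \<inter> {..u})"
    proof -
      have "F \<union> {m} \<union> {..u} = (F \<union> {m}) \<union> (?C \<inter> {..u})" using um by auto
      moreover have "(F \<union> {m}) \<inter> (?C \<inter> {..u}) = {}" using um by auto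
      ultimately show ?thesis using card_Un_disjoint[of "F \<union> {m}" "?C \<inter> {..u}"] fin cardmF by simp
    qed
    have rank: "\<exists>r<length cs. cs!r = u \<and> card (?C \<inter> {..u}) = Suc r \<and> ?C \<inter> {..u} = set (take (Suc r) cs)"
      if uC: "u \<in> ?C"
    proof -
      obtain r where r: "r < length cs" "cs!r = u" using uC scs(2) by (metis in_set_conv_nth)
      have e: "?C \<inter> {..u} = set (take (Suc r) cs)" using ss_take[OF scs(1) r(1)] r(2) scs(2) by simp
      have "card (set (take (Suc r) cs)) = Suc r" using card_take_distinct[OF scs(3)] r(1) by simp
      thus ?thesis using r e by auto
    qed
    show ?thesis
    proof
      assume L: "(\<forall>x\<in>set w. x = m \<or> x \<notin> F) \<and> card (F \<union> {m} \<union> {x. \<exists>b\<in>set w. b\<noteq>m \<and> x \<le> b}) = f"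
      have VC: "set ?V \<subseteq> ?C"
      proof
        fix x assume "x \<in> set ?V"
        hence "x \<in> set w" "x \<noteq> m" by auto
        moreover hence "x \<le> m" using wm by auto
        ultimately show "x \<in> ?C" using L by auto
      qed
      hence uC: "u \<in> ?C" using uV by blast
      obtain r where r: "r < length cs" "cs!r = u" "card (?C \<inter> {..u}) = Suc r" "?C \<inter> {..u} = set (take (Suc r) cs)"
        using rank[OF uC] by blast
      have "Suc i + Suc r = f" using L D cardD r(3) by simp
      hence br: "b = Suc r" using fb by simp
      have AV: "A = ?C \<inter> {..u}" using Ab br r(4) by simp
      have sw: "set w \<subseteq> A \<union> {m}"
      proof
        fix x assume "x \<in> set w"
        thus "x \<in> A \<union> {m}"
        proof (cases "x = m")
          case False
          hence "x \<in> set ?V" using \<open>x \<in> set w\<close> by simp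
          thus ?thesis using VC Vle AV by blast
        qed simp
      qed
      have Ane: "A \<noteq> {}" using Aempty br by simp
      have "Max A = cs!(b-1)" unfolding Ab by (rule Max_take[OF scs(1)]) (use br bl in auto)
      hence "Max A = u" using br r(2) by simp
      thus "set w \<subseteq> A \<union> {m} \<and> (if A = {} then ?V = [] else ?V \<noteq> [] \<and> Max (set ?V) = Max A)"
        using sw Ane False u_def by simp
    next
      assume R: "set w \<subseteq> A \<union> {m} \<and> (if A = {} then ?V = [] else ?V \<noteq> [] \<and> Max (set ?V) = Max A)"
      have Ane: "A \<noteq> {}" using R False by auto
      hence b1: "1 \<le> b" using Aempty by simp
      have MA: "u = Max A" using R Ane unfolding u_def by simp
      have AC: "A \<subseteq> ?C" unfolding Ab using set_take_subset[of b cs] scs(2) by blast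
      have "Max A = cs!(b-1)" unfolding Ab by (rule Max_take[OF scs(1) b1 bl])
      hence ub: "u = cs!(b-1)" using MA by simp
      have uC: "u \<in> ?C" using ub b1 bl scs(2) by (metis diff_less less_le_trans nth_mem zero_less_one)
      obtain r where r: "r < length cs" "cs!r = u" "card (?C \<inter> {..u}) = Suc r"
        using rank[OF uC] by blast
      have "r = b - 1" using r(1,2) ub b1 bl scs(3) nth_eq_iff_index_eq
        by (metis diff_less less_le_trans zero_less_one)
      hence "card (F \<union> {m} \<union> {x. \<exists>b\<in>set w. b\<noteq>m \<and> x \<le> b}) = f" using D cardD r(3) fb b1 by simp
      moreover have "\<forall>x\<in>set w. x = m \<or> x \<notin> F" using R AC by blast
      ultimately show "(\<forall>x\<in>set w. x = m \<or> x \<notin> F) \<and> card (F \<union> {m} \<union> {x. \<exists>b\<in>set w. b\<noteq>m \<and> x \<le> b}) = f"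
        by blast
    qed
  qed
qed

lemma g_iso:
  fixes cs :: "nat list"
  assumes s: "sorted_wrt (<) cs" and bl: "b \<le> length cs" and cm: "\<forall>x\<in>set cs. x < m"
  defines "g \<equiv> \<lambda>k. if k = Suc b then m else cs!(k-1)"
  shows "isoon ({1..b} \<union> {Suc b}) g" "g ` {1..b} = set (take b cs)" "g (Suc b) = m"
proof -
  have lt: "k \<in> {1..b} \<Longrightarrow> cs!(k-1) < m" for k using cm bl by (metis atLeastAtMost_iff diff_less less_le_trans nth_mem zero_less_one le_trans)
  show "isoon ({1..b} \<union> {Suc b}) g"
    unfolding isoon_def
  proof (intro ballI)
    fix x y assume x: "x \<in> {1..b} \<union> {Suc b}" and y: "y \<in> {1..b} \<union> {Suc b}"
    show "g x < g y \<longleftrightarrow> x < y"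
    proof (cases "x = Suc b")
      case True
      thus ?thesis using y lt[of y] unfolding g_def by auto
    next
      case xF: False
      hence xb: "x \<in> {1..b}" using x by simp
      show ?thesis
      proof (cases "y = Suc b")
        case True thus ?thesis using xb lt[of x] unfolding g_def by auto
      next
        case False
        hence yb: "y \<in> {1..b}" using y by simp
        have "cs!(x-1) < cs!(y-1) \<longleftrightarrow> x - 1 < y - 1" using ss_less[OF s, of "x-1" "y-1"] xb yb bl by auto
        thus ?thesis using xF False xb yb unfolding g_def by auto
      qed
    qed
  qed
  show "g ` {1..b} = set (take b cs)"
  proof (rule set_eqI, rule iffI)
    fix x assume "x \<in> g ` {1..b}"
    then obtain k where "k \<in> {1..b}" "x = cs!(k-1)" unfolding g_def by auto
    thus "x \<in> set (take b cs)" unfolding in_take_iff using bl by (intro exI[of _ "k-1"]) auto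
  next
    fix x assume "x \<in> set (take b cs)"
    then obtain k where k: "k < min b (length cs)" "cs!k = x" unfolding in_take_iff by blast
    hence "g (Suc k) = x" "Suc k \<in> {1..b}" unfolding g_def by auto
    thus "x \<in> g ` {1..b}" by (metis image_eqI)
  qed
  show "g (Suc b) = m" unfolding g_def by simp
qed



definition IS :: "nat \<Rightarrow> nat \<Rightarrow> nat \<Rightarrow> nat list set" where
  "IS n m f = {s. inv_seq n s \<and> avoids P2 s \<and> Max (set s) = m \<and> forb s P2 = f}"

lemma ifrak_IS: "ifrak n m f = card (IS n m f)"
  unfolding ifrak_def IS_def ..

lemma Max_lt: "s \<noteq> [] \<Longrightarrow> Max (set s) < (m::nat) \<Longrightarrow> \<forall>x\<in>set s. x < m"
  by (meson List.finite_set Max_ge le_less_trans)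

lemma append_Cons_nonempty: "xs @ y # ys \<noteq> []" by simp

lemma W_eq:
  assumes t: "\<tau> \<in> IS (p-1) j i" and p: "m+1 \<le> p" "p \<le> n" and ij: "i < f" "j < m" and fm: "f \<le> Suc m"
  defines "A \<equiv> set (take (f - i - 1) (sorted_list_of_set ({..<m} - Fs \<tau>)))"
  shows "{w. \<tau>@m#w \<in> IS n m f} = Wg A m (n-p)"
proof -
  have lt: "length \<tau> = p - 1" and invt: "\<forall>k<p-1. \<tau>!k < Suc k" and avt: "avoids P2 \<tau>"
    and mt: "Max (set \<tau>) = j" and ft: "forb \<tau> P2 = i"
    using t by (auto simp: IS_def inv_seq_def)
  have tne: "\<tau> \<noteq> []" using lt p ij by auto
  have tm: "\<forall>x\<in>set \<tau>. x < m" using Max_lt[OF tne] mt ij by simp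
  have cF: "card (Fs \<tau>) = i" using forb_eq[OF avt tne] ft by simp
  have Fm: "Fs \<tau> \<subseteq> {..<m}" using Fs_lt[OF tm] by blast
  have Asub: "A \<subseteq> {..<m}" unfolding A_def using set_take_subset by fastforce
  show ?thesis
  proof (rule set_eqI, rule iffI)
    fix w assume "w \<in> {w. \<tau>@m#w \<in> IS n m f}"
    hence inv: "inv_seq n (\<tau>@m#w)" and av: "avoids P2 (\<tau>@m#w)" and mx: "Max (set (\<tau>@m#w)) = m"
      and fo: "forb (\<tau>@m#w) P2 = f" by (auto simp: IS_def)
    have wm: "set w \<subseteq> {..m}" using mx by (metis List.finite_set Max_ge atMost_iff list.set_intros(2) set_append subsetI Un_iff)
    have wm': "\<forall>x\<in>set w. x \<le> m" using wm by auto
    have "p + length w = n" using inv lt p by (simp add: inv_seq_def)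
    hence lw: "length w = n - p" by simp
    have AV: "avoids P2 \<tau> \<and> (\<forall>x\<in>set w. x = m \<or> x \<notin> Fs \<tau>) \<and> sorted (filter (\<lambda>x. x \<noteq> m) w) \<and> \<not> contains w pat010"
      using av av_split[OF tm wm'] by blast
    have "card (Fs (\<tau>@m#w)) = f" using forb_eq[OF av] fo by simp
    hence cf: "card (Fs \<tau> \<union> {m} \<union> {x. \<exists>b\<in>set w. b\<noteq>m \<and> x \<le> b}) = f" using Fs_split[OF tm wm'] by simp
    have R: "set w \<subseteq> A \<union> {m} \<and> (if A = {} then filter (\<lambda>x. x\<noteq>m) w = [] else filter (\<lambda>x. x\<noteq>m) w \<noteq> [] \<and> Max (set (filter (\<lambda>x. x\<noteq>m) w)) = Max A)"
      unfolding A_def by (rule iffD1[OF W_char[OF finite_Fs Fm cF ij(1) fm wm]]) (use AV cf in blast)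
    have so: "sorted (filter (\<lambda>x. x \<noteq> m) w)" and nc: "\<not> contains w pat010" using AV by blast+
    show "w \<in> Wg A m (n-p)" unfolding Wg_def mem_Collect_eq av1_iff
      by (intro conjI lw conjunct1[OF R] conjunct2[OF R] so nc)
  next
    fix w assume "w \<in> Wg A m (n-p)"
    hence lw: "length w = n - p" and sA: "set w \<subseteq> A \<union> {m}" and nc: "\<not> contains w pat010"
      and so: "sorted (filter (\<lambda>x. x \<noteq> m) w)"
      and R2: "(if A = {} then filter (\<lambda>x. x\<noteq>m) w = [] else filter (\<lambda>x. x\<noteq>m) w \<noteq> [] \<and> Max (set (filter (\<lambda>x. x\<noteq>m) w)) = Max A)"
      unfolding Wg_def mem_Collect_eq av1_iff by blast+
    have wm: "set w \<subseteq> {..m}" using sA Asub by auto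
    have wm': "\<forall>x\<in>set w. x \<le> m" using wm by auto
    have L: "(\<forall>x\<in>set w. x = m \<or> x \<notin> Fs \<tau>) \<and> card (Fs \<tau> \<union> {m} \<union> {x. \<exists>b\<in>set w. b\<noteq>m \<and> x \<le> b}) = f"
      by (rule iffD2[OF W_char[OF finite_Fs Fm cF ij(1) fm wm]]) (use sA R2 in \<open>unfold A_def, blast\<close>)
    have av: "avoids P2 (\<tau>@m#w)" unfolding av_split[OF tm wm'] using avt L so nc by blast
    have fo: "forb (\<tau>@m#w) P2 = f" unfolding forb_eq[OF av, OF append_Cons_nonempty] Fs_split[OF tm wm'] using L by blast
    have mx: "Max (set (\<tau>@m#w)) = m"
    proof (rule Max_eqI)
      show "y \<le> m" if "y \<in> set (\<tau>@m#w)" for y using that tm wm' by (auto simp: less_imp_le)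
    qed auto
    have inv: "inv_seq n (\<tau>@m#w)"
      unfolding inv_seq_def
    proof (intro conjI allI impI)
      show "length (\<tau>@m#w) = n" using lt lw p by simp
      fix k assume k: "k < n"
      show "(\<tau>@m#w)!k < Suc k"
      proof (cases "k < p - 1")
        case True thus ?thesis using invt lt by (simp add: nth_append)
      next
        case False
        hence "k \<ge> length \<tau>" using lt by simp
        hence e: "(\<tau>@m#w)!k = (m#w)!(k - length \<tau>)" by (simp add: nth_append)
        have "k - length \<tau> < length (m#w)" using k lt lw p by simp
        hence "(m#w)!(k - length \<tau>) \<in> set (m#w)" by (rule nth_mem)
        hence "(\<tau>@m#w)!k \<in> set (m#w)" using e by simp
        hence "(\<tau>@m#w)!k \<le> m" using wm' by auto
        thus ?thesis using False p by simp
      qed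
    qed
    show "w \<in> {w. \<tau>@m#w \<in> IS n m f}" unfolding IS_def mem_Collect_eq by (intro conjI inv av mx fo)
  qed
qed



lemma W_card:
  assumes t: "\<tau> \<in> IS (p-1) j i" and p: "m+1 \<le> p" "p \<le> n" and ij: "i < f" "j < m" and fm: "f \<le> Suc m"
  shows "card {w. \<tau>@m#w \<in> IS n m f} = hfrak (n-p) (f-i-1)"
proof -
  define cs where "cs = sorted_list_of_set ({..<m} - Fs \<tau>)"
  define b where "b = f - i - 1"
  have lt: "length \<tau> = p - 1" and avt: "avoids P2 \<tau>" and mt: "Max (set \<tau>) = j" and ft: "forb \<tau> P2 = i"
    using t by (auto simp: IS_def inv_seq_def)
  have tne: "\<tau> \<noteq> []" using lt p ij by auto
  have tm: "\<forall>x\<in>set \<tau>. x < m" using Max_lt[OF tne] mt ij by simp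
  have cF: "card (Fs \<tau>) = i" using forb_eq[OF avt tne] ft by simp
  have Fm: "Fs \<tau> \<subseteq> {..<m}" using Fs_lt[OF tm] by blast
  have scs: "sorted_wrt (<) cs" "set cs = {..<m} - Fs \<tau>" by (simp_all add: cs_def)
  have lcs: "length cs = m - i" using Fm finite_Fs cF by (simp add: cs_def card_Diff_subset)
  have bl: "b \<le> length cs" using lcs fm ij by (simp add: b_def)
  have cm: "\<forall>x\<in>set cs. x < m" using scs by auto
  define g where "g = (\<lambda>k. if k = Suc b then m else cs!(k-1))"
  have G: "isoon ({1..b} \<union> {Suc b}) g" "g ` {1..b} = set (take b cs)" "g (Suc b) = m"
    using g_iso[OF scs(1) bl cm] unfolding g_def by blast+
  have "card {w. \<tau>@m#w \<in> IS n m f} = card (Wg (set (take b cs)) m (n-p))"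
    using W_eq[OF t p ij fm] unfolding cs_def b_def by simp
  also have "\<dots> = card (Wg {1..b} (Suc b) (n-p))"
    using Wg_iso[OF _ G(1), of "n-p"] G(2,3) by simp
  also have "\<dots> = hfrak (n-p) (f-i-1)" using hfrak_Wg b_def by simp
  finally show ?thesis .
qed

lemma finIS: "finite (IS n m f)"
proof (rule finite_subset[OF _ finite_lists_length_eq[of "{..<n}" n]])
  show "IS n m f \<subseteq> {xs. set xs \<subseteq> {..<n} \<and> length xs = n}"
  proof
    fix s assume "s \<in> IS n m f"
    hence "inv_seq n s" by (simp add: IS_def)
    hence l: "length s = n" and b: "\<forall>k<n. s!k < Suc k" by (auto simp: inv_seq_def)
    have "set s \<subseteq> {..<n}"
    proof
      fix x assume "x \<in> set s"
      then obtain k where "k < length s" "s!k = x" by (auto simp: in_set_conv_nth)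
      thus "x \<in> {..<n}" using b l by force
    qed
    thus "s \<in> {xs. set xs \<subseteq> {..<n} \<and> length xs = n}" using l by simp
  qed
qed simp

lemma split_unique:
  assumes "m \<notin> set \<tau>" "m \<notin> set \<tau>'" "\<tau>@m#w = \<tau>'@(m::nat)#w'"
  shows "\<tau> = \<tau>' \<and> w = w'"
proof -
  have "takeWhile (\<lambda>x. x \<noteq> m) (\<tau>@m#w) = \<tau>" by (subst takeWhile_append2) (use assms(1) in auto)
  moreover have "takeWhile (\<lambda>x. x \<noteq> m) (\<tau>'@m#w') = \<tau>'" by (subst takeWhile_append2) (use assms(2) in auto)
  ultimately have "\<tau> = \<tau>'" using assms(3) by metis
  thus ?thesis using assms(3) by simp
qed



theorem mainTheorem10:
  fixes n m f :: nat
  assumes "n \<ge> 1" and "m \<ge> 1" and "f \<le> m + 1"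
  shows "ifrak n m f =
    (\<Sum>p=m+1..n. \<Sum>i<f. \<Sum>j<m. ifrak (p - 1) j i * hfrak (n - p) (f - i - 1))"
proof -
  have n1: "n \<ge> 1" and m1: "m \<ge> 1" and fm: "f \<le> Suc m" using assms by auto
  define I where "I = {m+1..n} \<times> {..<f} \<times> {..<m}"
  define B where "B = (\<lambda>x. case x of (p,i,j) \<Rightarrow> IS (p-1) j i)"
  define T where "T = (\<Union>x\<in>I. B x)"
  define W where "W = (\<lambda>\<tau>. {w. \<tau>@m#w \<in> IS n m f})"
  have finI: "finite I" unfolding I_def by simp
  have finB: "finite (B x)" for x unfolding B_def by (cases x) (auto simp: finIS)
  have finT: "finite T" unfolding T_def using finI finB by blast
  have finW: "finite (W \<tau>)" for \<tau>
  proof (rule finite_subset[OF _ finite_imageI[OF finIS[of n m f], of "drop (Suc (length \<tau>))"]])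
    show "W \<tau> \<subseteq> drop (Suc (length \<tau>)) ` IS n m f"
    proof
      fix w assume "w \<in> W \<tau>"
      hence "\<tau>@m#w \<in> IS n m f" by (simp add: W_def)
      moreover have "w = drop (Suc (length \<tau>)) (\<tau>@m#w)" by simp
      ultimately show "w \<in> drop (Suc (length \<tau>)) ` IS n m f" by blast
    qed
  qed
  have Tmem: "\<exists>p i j. (p,i,j) \<in> I \<and> \<tau> \<in> IS (p-1) j i" if "\<tau> \<in> T" for \<tau>
    using that unfolding T_def B_def by auto
  have notin: "m \<notin> set \<tau>" if tT: "\<tau> \<in> T" for \<tau>
  proof -
    obtain p i j where pij: "(p,i,j) \<in> I" "\<tau> \<in> IS (p-1) j i" using Tmem[OF tT] by blast
    hence "length \<tau> = p - 1" "Max (set \<tau>) = j" "j < m" "m + 1 \<le> p"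
      by (auto simp: IS_def inv_seq_def I_def)
    moreover hence "\<tau> \<noteq> []" using m1 by auto
    ultimately show ?thesis using Max_lt by blast
  qed
  have decomp: "IS n m f = (\<lambda>(\<tau>,w). \<tau>@m#w) ` (SIGMA \<tau>:T. W \<tau>)"
  proof (rule set_eqI, rule iffI)
    fix x assume "x \<in> (\<lambda>(\<tau>,w). \<tau>@m#w) ` (SIGMA \<tau>:T. W \<tau>)"
    thus "x \<in> IS n m f" by (auto simp: W_def)
  next
    fix \<sigma> assume sig: "\<sigma> \<in> IS n m f"
    hence inv: "inv_seq n \<sigma>" and av: "avoids P2 \<sigma>" and mx: "Max (set \<sigma>) = m" and fo: "forb \<sigma> P2 = f"
      by (auto simp: IS_def)
    have ls: "length \<sigma> = n" and bs: "\<forall>k<n. \<sigma>!k < Suc k" using inv by (auto simp: inv_seq_def)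
    have sne: "\<sigma> \<noteq> []" using ls n1 by auto
    have mins: "m \<in> set \<sigma>" using mx Max_in[of "set \<sigma>"] sne by auto
    have sle: "\<forall>x\<in>set \<sigma>. x \<le> m" using mx by auto
    define \<tau> where "\<tau> = takeWhile (\<lambda>x. x \<noteq> m) \<sigma>"
    define r where "r = dropWhile (\<lambda>x. x \<noteq> m) \<sigma>"
    have rne: "r \<noteq> []" using mins unfolding r_def by (simp add: dropWhile_eq_Nil_conv)
    have hr: "hd r = m" using hd_dropWhile[of "\<lambda>x. x \<noteq> m" \<sigma>] rne unfolding r_def by simp
    define w where "w = tl r"
    have rmw: "r = m # w" using rne hr unfolding w_def by (cases r) auto
    have sdec: "\<sigma> = \<tau>@m#w" using takeWhile_dropWhile_id[of "\<lambda>x. x \<noteq> m" \<sigma>] rmw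
      unfolding \<tau>_def r_def by simp
    have mt: "m \<notin> set \<tau>" unfolding \<tau>_def by (auto dest: set_takeWhileD)
    have tm: "\<forall>x\<in>set \<tau>. x < m" using sle mt sdec by (metis Un_iff le_neq_implies_less set_append)
    have wm: "\<forall>x\<in>set w. x \<le> m" using sle sdec by simp
    have ltn: "length \<tau> < n" using ls sdec by auto
    have "\<sigma>!(length \<tau>) = m" using sdec by (metis nth_append_length)
    hence mlt: "m \<le> length \<tau>" using bs ltn by fastforce
    hence tne: "\<tau> \<noteq> []" using m1 by auto
    have avs: "avoids P2 \<tau> \<and> (\<forall>x\<in>set w. x = m \<or> x \<notin> Fs \<tau>) \<and> sorted (filter (\<lambda>x. x \<noteq> m) w) \<and> \<not> contains w pat010"
      using av av_split[OF tm wm] sdec by simp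
    hence avt: "avoids P2 \<tau>" by blast
    have invt: "inv_seq (length \<tau>) \<tau>"
      unfolding inv_seq_def
    proof (intro conjI allI impI refl)
      fix k assume k: "k < length \<tau>"
      hence "\<tau>!k = \<sigma>!k" using sdec by (simp add: nth_append)
      thus "\<tau>!k < Suc k" using bs k ltn by simp
    qed
    define j where "j = Max (set \<tau>)"
    have jm: "j < m" unfolding j_def using tm tne Max_in[of "set \<tau>"] by auto
    define i where "i = forb \<tau> P2"
    have ci: "card (Fs \<tau>) = i" using forb_eq[OF avt tne] unfolding i_def by simp
    have mF: "m \<notin> Fs \<tau>" using Fs_lt[OF tm] by blast
    have "card (Fs \<sigma>) = f" using forb_eq[OF av sne] fo by simp
    moreover have "Fs \<tau> \<union> {m} \<subseteq> Fs \<sigma>" using Fs_split[OF tm wm] sdec by auto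
    hence "card (Fs \<tau> \<union> {m}) \<le> card (Fs \<sigma>)" by (rule card_mono[OF finite_Fs])
    moreover have "card (Fs \<tau> \<union> {m}) = Suc i" using mF ci finite_Fs by simp
    ultimately have "i < f" by simp
    define p where "p = Suc (length \<tau>)"
    have pI: "(p,i,j) \<in> I" unfolding I_def p_def using mlt ltn \<open>i < f\<close> jm by auto
    have tIS: "\<tau> \<in> IS (p-1) j i" unfolding IS_def p_def using invt avt j_def i_def by simp
    have tT: "\<tau> \<in> T" unfolding T_def B_def using pI tIS by force
    have wW: "w \<in> W \<tau>" unfolding W_def using sig sdec by simp
    show "\<sigma> \<in> (\<lambda>(\<tau>,w). \<tau>@m#w) ` (SIGMA \<tau>:T. W \<tau>)"
      using tT wW sdec by (intro image_eqI[of _ _ "(\<tau>,w)"]) auto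
  qed
  have inj: "inj_on (\<lambda>(\<tau>,w). \<tau>@m#w) (SIGMA \<tau>:T. W \<tau>)"
  proof (rule inj_onI)
    fix x y assume "x \<in> (SIGMA \<tau>:T. W \<tau>)" "y \<in> (SIGMA \<tau>:T. W \<tau>)" "(\<lambda>(\<tau>,w). \<tau>@m#w) x = (\<lambda>(\<tau>,w). \<tau>@m#w) y"
    moreover obtain a b where xe: "x = (a,b)" by (cases x)
    moreover obtain c d where ye: "y = (c,d)" by (cases y)
    ultimately have "a \<in> T" "c \<in> T" "a@m#b = c@m#d" by auto
    hence "a = c \<and> b = d" using split_unique[of m a c b d] notin by blast
    thus "x = y" using xe ye by simp
  qed
  have "ifrak n m f = card (SIGMA \<tau>:T. W \<tau>)"
    unfolding ifrak_IS decomp using card_image[OF inj] .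
  also have "\<dots> = (\<Sum>\<tau>\<in>T. card (W \<tau>))" using finT finW by simp
  also have "\<dots> = (\<Sum>x\<in>I. \<Sum>\<tau>\<in>B x. card (W \<tau>))"
    unfolding T_def
  proof (rule sum.UNION_disjoint[OF finI])
    show "\<forall>x\<in>I. finite (B x)" using finB by blast
    show "\<forall>x\<in>I. \<forall>y\<in>I. x \<noteq> y \<longrightarrow> B x \<inter> B y = {}"
    proof (intro ballI impI)
      fix x y assume x: "x \<in> I" and y: "y \<in> I" and xy: "x \<noteq> y"
      obtain p i j where xe: "x = (p,i,j)" by (cases x) auto
      obtain p' i' j' where ye: "y = (p',i',j')" by (cases y) auto
      show "B x \<inter> B y = {}"
      proof (rule ccontr)
        assume "B x \<inter> B y \<noteq> {}"
        then obtain \<tau> where "\<tau> \<in> IS (p-1) j i" "\<tau> \<in> IS (p'-1) j' i'" unfolding B_def xe ye by auto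
        hence "p - 1 = p' - 1" "j = j'" "i = i'" by (auto simp: IS_def inv_seq_def)
        moreover have "p \<ge> 1" "p' \<ge> 1" using x y xe ye unfolding I_def by auto
        ultimately show False using xy xe ye by simp
      qed
    qed
  qed
  also have "\<dots> = (\<Sum>x\<in>I. case x of (p,i,j) \<Rightarrow> ifrak (p - 1) j i * hfrak (n - p) (f - i - 1))"
  proof (rule sum.cong[OF refl])
    fix x assume x: "x \<in> I"
    obtain p i j where xe: "x = (p,i,j)" by (cases x) auto
    have pij: "m+1 \<le> p" "p \<le> n" "i < f" "j < m" using x xe unfolding I_def by auto
    have "(\<Sum>\<tau>\<in>B x. card (W \<tau>)) = (\<Sum>\<tau>\<in>IS (p-1) j i. hfrak (n - p) (f - i - 1))"
      unfolding B_def xe W_def using W_card pij fm by (intro sum.cong) auto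
    also have "\<dots> = ifrak (p - 1) j i * hfrak (n - p) (f - i - 1)" by (simp add: ifrak_IS)
    finally show "(\<Sum>\<tau>\<in>B x. card (W \<tau>)) = (case x of (p,i,j) \<Rightarrow> ifrak (p - 1) j i * hfrak (n - p) (f - i - 1))"
      using xe by simp
  qed
  also have "\<dots> = (\<Sum>p=m+1..n. \<Sum>i<f. \<Sum>j<m. ifrak (p - 1) j i * hfrak (n - p) (f - i - 1))"
    unfolding I_def by (simp add: sum.cartesian_product)
  finally show ?thesis .
qed



end
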